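(* Let $\mathbf M=(M_\alpha)_{\alpha\in\mathbb N_0^d}$ and $\mathbf N=(N_\alpha)_{\alpha\in\mathbb N_0^d}$ be sequences of positive reals with $M_0=N_0=1$, and suppose there exist $H,C,B>0$ such that $\alpha^{\alpha/2}M_\beta\le B\,C^{|\alpha|}H^{|\alpha+\beta|}N_{\alpha+\beta}$ for all $\alpha,\beta\in\mathbb N_0^d$. Then, for all $\gamma\in\mathbb N_0^d$, $$\sup_{\alpha,\beta\in\mathbb N_0^d}\frac{\|x^\alpha\partial^\beta H_\gamma\|_{L^2}}{(2HC)^{|\alpha+\beta|}N_{\alpha+\beta}}\le B\,e^{\omega_{\mathbf M}(\gamma^{1/2}/C)},$$ where $\gamma^{1/2}:=(\gamma_1^{1/2},\dots,\gamma_d^{1/2})$ and $B,C,H$ are the constants above.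
   Context: Notation: $|\alpha|=\sum\alpha_j$, $\alpha^{\alpha/2}=\prod_j\alpha_j^{\alpha_j/2}$ with $0^0=1$. The associated weight function of $\mathbf M$ is $\omega_{\mathbf M}(t)=\sup_{\alpha\in\mathbb N^d_{0,t}}\log\frac{|t^\alpha|}{M_\alpha}$ ($t\in\mathbb R^d$), where $\mathbb N^d_{0,t}=\{\alpha:\alpha_j=0\text{ whenever }t_j=0\}$. Hermite functions: $H_\gamma(x)=(2^{|\gamma|}\gamma!\pi^{d/2})^{-1/2}h_\gamma(x)e^{-|x|^2/2}$, $h_\gamma(x)=(-1)^{|\gamma|}e^{|x|^2}\partial^\gamma e^{-|x|^2}$. *)

theory Defs
  imports "HOL-Analysis.Analysis"
begin

text \<open>Multi-indices in N_0^d are functions 'n => nat on a finite index type 'n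
  (d = CARD('n)); points of R^d are vectors real^'n.\<close>

definition mlen :: "('n::finite \<Rightarrow> nat) \<Rightarrow> nat" where
  "mlen \<alpha> = (\<Sum>j\<in>UNIV. \<alpha> j)"

definition madd :: "('n \<Rightarrow> nat) \<Rightarrow> ('n \<Rightarrow> nat) \<Rightarrow> ('n \<Rightarrow> nat)" where
  "madd \<alpha> \<beta> = (\<lambda>j. \<alpha> j + \<beta> j)"

definition mfact :: "('n::finite \<Rightarrow> nat) \<Rightarrow> real" where
  "mfact \<alpha> = (\<Prod>j\<in>UNIV. fact (\<alpha> j))"

text \<open>alpha^(alpha/2) = prod_j alpha_j^(alpha_j/2) with 0^0 = 1\<close>
definition mselfpow_half :: "('n::finite \<Rightarrow> nat) \<Rightarrow> real" where
  "mselfpow_half \<alpha> = (\<Prod>j\<in>UNIV. sqrt (real (\<alpha> j)) ^ (\<alpha> j))"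

definition mpow :: "real^'n::finite \<Rightarrow> ('n \<Rightarrow> nat) \<Rightarrow> real" where
  "mpow x \<alpha> = (\<Prod>j\<in>UNIV. (x $ j) ^ (\<alpha> j))"

definition pdiff :: "'n::finite \<Rightarrow> (real^'n \<Rightarrow> real) \<Rightarrow> real^'n \<Rightarrow> real" where
  "pdiff j f x = deriv (\<lambda>t. f (x + t *\<^sub>R axis j 1)) 0"

definition Dmulti :: "('n::{finite,linorder} \<Rightarrow> nat) \<Rightarrow> (real^'n::{finite,linorder} \<Rightarrow> real) \<Rightarrow> real^'n::{finite,linorder} \<Rightarrow> real" where
  "Dmulti \<beta> f = foldr (\<lambda>j g. (pdiff j ^^ \<beta> j) g) (sorted_list_of_set UNIV) f"

definition hermite_poly :: "('n::{finite,linorder} \<Rightarrow> nat) \<Rightarrow> real^'n::{finite,linorder} \<Rightarrow> real" where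
  "hermite_poly \<gamma> x = (-1) ^ mlen \<gamma> * exp ((norm x)\<^sup>2) *
      Dmulti \<gamma> (\<lambda>y. exp (- (norm y)\<^sup>2)) x"

definition hermite_fun :: "('n::{finite,linorder} \<Rightarrow> nat) \<Rightarrow> real^'n::{finite,linorder} \<Rightarrow> real" where
  "hermite_fun \<gamma> x = inverse (sqrt (2 ^ mlen \<gamma> * mfact \<gamma> * pi powr (real CARD('n) / 2)))
      * hermite_poly \<gamma> x * exp (- (norm x)\<^sup>2 / 2)"

definition L2norm :: "(real^'n::finite \<Rightarrow> real) \<Rightarrow> real" where
  "L2norm f = sqrt (integral\<^sup>L lborel (\<lambda>x. (f x)\<^sup>2))"

definition weight_fun :: "(('n::finite \<Rightarrow> nat) \<Rightarrow> real) \<Rightarrow> real^'n \<Rightarrow> ereal" where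
  "weight_fun M t = (SUP \<alpha>\<in>{\<alpha>. \<forall>j. t $ j = 0 \<longrightarrow> \<alpha> j = 0}.
       ereal (ln (\<bar>mpow t \<alpha>\<bar> / M \<alpha>)))"

definition exp_ereal :: "ereal \<Rightarrow> ereal" where
  "exp_ereal x = (case x of ereal r \<Rightarrow> ereal (exp r) | PInfty \<Rightarrow> PInfty | MInfty \<Rightarrow> 0)"

end

theory Submission
  imports Defs "HOL-Probability.Distributions"
begin

fun He :: "nat \<Rightarrow> real \<Rightarrow> real" where
  "He 0 t = 1"
| "He (Suc n) t = 2 * t * He n t - 2 * real n * He (n - 1) t"

lemma He_deriv:
  "(He n has_real_derivative (2 * real n * He (n - 1) t)) (at t)"
proof (induction n arbitrary: t rule: less_induct)
  case (less n)
  show ?case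
  proof (cases n)
    case 0 then show ?thesis by simp
  next
    case (Suc m)
    show ?thesis
    proof (cases m)
      case 0
      have "((\<lambda>t. 2 * t * 1 - 0) has_real_derivative 2) (at t)"
        by (auto intro!: derivative_eq_intros)
      then show ?thesis using Suc 0 by simp
    next
      case (Suc k)
      have "m < n" "k < n" using \<open>n = Suc m\<close> Suc by auto
      have IH1: "\<And>t. (He m has_real_derivative (2 * real m * He k t)) (at t)"
        using less(1)[OF \<open>m < n\<close>] Suc by (simp del: He.simps)
      have IH2: "\<And>t. (He k has_real_derivative (2 * real k * He (k - 1) t)) (at t)"
        using less(1)[OF \<open>k < n\<close>] by simp
      have eq: "He m t = 2 * t * He k t - 2 * real k * He (k - 1) t"
        using Suc by simp
      have "((\<lambda>t. 2 * t * He m t - 2 * real m * He k t) has_real_derivative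
          (2 * He m t + 2 * t * (2 * real m * He k t) - 2 * real m * (2 * real k * He (k - 1) t))) (at t)"
        by (auto intro!: derivative_eq_intros IH1 IH2)
      moreover have "2 * He m t + 2 * t * (2 * real m * He k t) - 2 * real m * (2 * real k * He (k - 1) t)
          = 2 * real n * He (n - 1) t"
        unfolding \<open>n = Suc m\<close> diff_Suc_1 eq by (simp add: algebra_simps)
      moreover have "He n = (\<lambda>t. 2 * t * He m t - 2 * real m * He k t)"
        using \<open>n = Suc m\<close> \<open>m = Suc k\<close> by (intro ext) (simp only: He.simps(2) diff_Suc_1)
      ultimately show ?thesis by simp
    qed
  qed
qed

lemma He_rec: "He (Suc n) t = 2 * t * He n t - 2 * real n * He (n - 1) t"
  by simp

lemma He_cont[continuous_intros]: "continuous_on S (He n)"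
  by (meson DERIV_isCont continuous_at_imp_continuous_on He_deriv)

lemma He_meas[measurable]: "He n \<in> borel_measurable borel"
  by (intro borel_measurable_continuous_onI He_cont)

lemma He_bound: "\<exists>A. \<forall>t. \<bar>He n t\<bar> \<le> A * (1 + \<bar>t\<bar>) ^ n"
proof (induction n rule: less_induct)
  case (less n)
  show ?case
  proof (cases n)
    case 0 then show ?thesis by (intro exI[of _ 1]) simp
  next
    case (Suc m)
    obtain A1 where A1: "\<And>t. \<bar>He m t\<bar> \<le> A1 * (1 + \<bar>t\<bar>) ^ m"
      using less[of m] Suc by auto
    have "m - 1 < n" using Suc by simp
    then obtain A2 where A2: "\<And>t. \<bar>He (m - 1) t\<bar> \<le> A2 * (1 + \<bar>t\<bar>) ^ (m - 1)"
      using less(1) by blast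
    have "\<bar>He m 0\<bar> \<le> A1" using A1[of 0] by simp
    then have A1p: "A1 \<ge> 0" by linarith
    have "\<bar>He (m-1) 0\<bar> \<le> A2" using A2[of 0] by simp
    then have A2p: "A2 \<ge> 0" by linarith
    show ?thesis
    proof (intro exI[of _ "2 * A1 + 2 * real m * A2"] allI)
      fix t :: real
      have p2: "(1 + \<bar>t\<bar>) ^ (m - 1) \<le> (1 + \<bar>t\<bar>) ^ Suc m"
        by (rule power_increasing) auto
      have "\<bar>He n t\<bar> \<le> 2 * \<bar>t\<bar> * \<bar>He m t\<bar> + 2 * real m * \<bar>He (m - 1) t\<bar>"
      proof -
        have "He n t = 2 * t * He m t - 2 * real m * He (m - 1) t" using Suc by simp
        then have "\<bar>He n t\<bar> \<le> \<bar>2 * t * He m t\<bar> + \<bar>2 * real m * He (m - 1) t\<bar>"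
          by (simp only: abs_triangle_ineq4)
        then show ?thesis by (simp add: abs_mult)
      qed
      also have "\<dots> \<le> 2 * (1 + \<bar>t\<bar>) * (A1 * (1 + \<bar>t\<bar>) ^ m) + 2 * real m * (A2 * (1 + \<bar>t\<bar>) ^ Suc m)"
      proof (rule add_mono)
        have "\<bar>He (m - 1) t\<bar> \<le> A2 * (1 + \<bar>t\<bar>) ^ Suc m"
          using A2[of t] mult_left_mono[OF p2 A2p] by linarith
        then show "2 * real m * \<bar>He (m - 1) t\<bar> \<le> 2 * real m * (A2 * (1 + \<bar>t\<bar>) ^ Suc m)"
          by (intro mult_left_mono) auto
        show "2 * \<bar>t\<bar> * \<bar>He m t\<bar> \<le> 2 * (1 + \<bar>t\<bar>) * (A1 * (1 + \<bar>t\<bar>) ^ m)"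
          using A1[of t] by (intro mult_mono) auto
      qed
      also have "\<dots> = (2 * A1 + 2 * real m * A2) * (1 + \<bar>t\<bar>) ^ n"
        using Suc by (simp add: algebra_simps)
      finally show "\<bar>He n t\<bar> \<le> (2 * A1 + 2 * real m * A2) * (1 + \<bar>t\<bar>) ^ n" .
    qed
  qed
qed

lemma FTC_real_line:
  fixes f F :: "real \<Rightarrow> real"
  assumes F: "\<And>x. (F has_real_derivative f x) (at x)"
    and fc: "continuous_on UNIV f"
    and fi: "integrable lborel f"
    and lt: "(F \<longlongrightarrow> 0) at_top" and lb: "(F \<longlongrightarrow> 0) at_bot"
  shows "integral\<^sup>L lborel f = 0"
proof -
  have "(LBINT x=-\<infinity>..\<infinity>. f x) = 0 - 0"
  proof (rule interval_integral_FTC_integrable)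
    show "- \<infinity> < (\<infinity>::ereal)" by simp
    show "(F has_vector_derivative f x) (at x)" for x
      using F[of x] by (simp add: has_real_derivative_iff_has_vector_derivative)
    show "isCont f x" for x using fc by (simp add: continuous_on_eq_continuous_at)
    show "set_integrable lborel (einterval (- \<infinity>) \<infinity>) f"
      using fi by (simp add: set_integrable_def)
    show "((F \<circ> real_of_ereal) \<longlongrightarrow> 0) (at_right (- \<infinity>))"
      using lb by (simp add: ereal_tendsto_simps1)
    show "((F \<circ> real_of_ereal) \<longlongrightarrow> 0) (at_left \<infinity>)"
      using lt by (simp add: ereal_tendsto_simps1)
  qed
  then show ?thesis
    by (simp add: interval_lebesgue_integral_def set_lebesgue_integral_def)
qed

definition gdom :: "(real \<Rightarrow> real) \<Rightarrow> bool" where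
  "gdom f \<longleftrightarrow> f \<in> borel_measurable borel \<and> (\<exists>A K. \<forall>t. \<bar>f t\<bar> \<le> A * (1 + \<bar>t\<bar>) ^ K * exp (- t\<^sup>2 / 2))"

lemma poly_gauss_bound: "(1 + \<bar>x\<bar>) ^ K \<le> 2 ^ (2*K) * (1 + x ^ (2*K))" for x :: real
proof -
  have "(1 + \<bar>x\<bar>) ^ K \<le> (2 * max 1 \<bar>x\<bar>) ^ K"
    by (intro power_mono) auto
  also have "\<dots> \<le> (2 * max 1 \<bar>x\<bar>) ^ (2*K)"
    by (intro power_increasing) auto
  also have "\<dots> = 2 ^ (2*K) * (max 1 \<bar>x\<bar>) ^ (2*K)"
    by (simp add: power_mult_distrib)
  finally have 1: "(1 + \<bar>x\<bar>) ^ K \<le> 2 ^ (2*K) * (max 1 \<bar>x\<bar>) ^ (2*K)" .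
  have 2: "(max 1 \<bar>x\<bar>) ^ (2*K) \<le> 1 + x ^ (2*K)"
  proof (cases "\<bar>x\<bar> \<le> 1")
    case True then show ?thesis by (simp add: max_def power_mult)
  next
    case False
    then have "(max 1 \<bar>x\<bar>) ^ (2*K) = \<bar>x\<bar> ^ (2*K)" by (simp add: max_def)
    also have "\<dots> = x ^ (2*K)" by (simp add: power_mult)
    finally show ?thesis by simp
  qed
  have "2 ^ (2*K) * (max 1 \<bar>x\<bar>) ^ (2*K) \<le> 2 ^ (2*K) * (1 + x ^ (2*K))"
    using 2 by (intro mult_left_mono) auto
  with 1 show ?thesis by linarith
qed

lemma poly_gauss_integrable: "integrable lborel (\<lambda>t::real. (1 + \<bar>t\<bar>) ^ K * exp (- t\<^sup>2))"
proof -
  have i0: "integrable lborel (\<lambda>x::real. exp (-x\<^sup>2)*x^(2 * k))" for k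
    using has_bochner_integral_even_function[OF gaussian_moment_even_pos[where k=k]]
    by (auto simp: integrable.intros)
  have "integrable lborel (\<lambda>x::real. 2 ^ (2*K) * (exp (-x\<^sup>2)*x^(2 * 0) + exp (-x\<^sup>2)*x^(2 * K)))"
    by (intro integrable_mult_right Bochner_Integration.integrable_add i0)
  moreover have "(\<lambda>x::real. 2 ^ (2*K) * (exp (-x\<^sup>2)*x^(2 * 0) + exp (-x\<^sup>2)*x^(2 * K)))
     = (\<lambda>x. 2 ^ (2*K) * (1 + x ^ (2*K)) * exp (- x\<^sup>2))"
    by (simp add: fun_eq_iff algebra_simps)
  ultimately have ii: "integrable lborel (\<lambda>x::real. 2 ^ (2*K) * (1 + x ^ (2*K)) * exp (- x\<^sup>2))"
    by metis
  have key: "norm ((1 + \<bar>x\<bar>) ^ K * exp (- x\<^sup>2))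
        \<le> norm (2 ^ (2*K) * (1 + x ^ (2*K)) * exp (- x\<^sup>2))" for x :: real
  proof -
      have p: "0 \<le> x ^ (2*K)" by (simp add: power_mult)
      have "(1 + \<bar>x\<bar>) ^ K * exp (- x\<^sup>2) \<le> 2 ^ (2*K) * (1 + x ^ (2*K)) * exp (- x\<^sup>2)"
        using poly_gauss_bound[of x K] by (intro mult_right_mono) auto
      then show ?thesis
        using p by (simp add: abs_mult)
  qed
  show ?thesis
  proof (rule Bochner_Integration.integrable_bound[OF ii])
    show "(\<lambda>t::real. (1 + \<bar>t\<bar>) ^ K * exp (- t\<^sup>2)) \<in> borel_measurable lborel"
      unfolding measurable_lborel2 by (intro borel_measurable_continuous_onI continuous_intros)
    show "AE x in lborel. norm ((1 + \<bar>x::real\<bar>) ^ K * exp (- x\<^sup>2))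
        \<le> norm (2 ^ (2*K) * (1 + x ^ (2*K)) * exp (- x\<^sup>2))"
      using key by (intro AE_I2) blast
  qed
qed

lemma poly_gauss_lim:
  "((\<lambda>t::real. (1 + \<bar>t\<bar>) ^ K * exp (- t\<^sup>2)) \<longlongrightarrow> 0) at_top"
  "((\<lambda>t::real. (1 + \<bar>t\<bar>) ^ K * exp (- t\<^sup>2)) \<longlongrightarrow> 0) at_bot"
proof -
  have bnd: "\<bar>(1 + \<bar>t\<bar>) ^ K * exp (- t\<^sup>2)\<bar> \<le> exp 2 * ((1 + \<bar>t\<bar>) ^ K / exp (1 + \<bar>t\<bar>))" for t :: real
  proof -
    have "1 + \<bar>t\<bar> \<le> t\<^sup>2 + 2"
    proof -
      have "0 \<le> (\<bar>t\<bar> - 1)\<^sup>2" by simp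
      also have "(\<bar>t\<bar> - 1)\<^sup>2 = t\<^sup>2 - 2 * \<bar>t\<bar> + 1" by (simp add: power2_diff)
      finally show ?thesis by (smt (verit) zero_le_power2)
    qed
    then have "exp (- t\<^sup>2) \<le> exp 2 / exp (1 + \<bar>t\<bar>)"
      by (simp add: exp_diff[symmetric])
    then have "(1 + \<bar>t\<bar>) ^ K * exp (- t\<^sup>2) \<le> (1 + \<bar>t\<bar>) ^ K * (exp 2 / exp (1 + \<bar>t\<bar>))"
      by (intro mult_left_mono) auto
    then show ?thesis by (simp add: ac_simps)
  qed
  have lim: "((\<lambda>t::real. exp 2 * ((1 + \<bar>t\<bar>) ^ K / exp (1 + \<bar>t\<bar>))) \<longlongrightarrow> 0) F"
    if "filterlim (\<lambda>t::real. 1 + \<bar>t\<bar>) at_top F" for F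
    using tendsto_mult_right_zero[OF filterlim_compose[OF tendsto_power_div_exp_0 that], of "exp 2"]
    by (simp add: o_def)
  have ev: "eventually (\<lambda>t. norm ((1 + \<bar>t\<bar>) ^ K * exp (- t\<^sup>2)) \<le> exp 2 * ((1 + \<bar>t\<bar>) ^ K / exp (1 + \<bar>t\<bar>))) F" for F
    using bnd by (auto intro!: always_eventually)
  have "filterlim (\<lambda>t::real. 1 + \<bar>t\<bar>) at_top at_top"
    by (intro filterlim_tendsto_add_at_top[OF tendsto_const] filterlim_abs_real)
  from Lim_null_comparison[OF ev lim[OF this]]
  show "((\<lambda>t::real. (1 + \<bar>t\<bar>) ^ K * exp (- t\<^sup>2)) \<longlongrightarrow> 0) at_top" .
  have "filterlim (\<lambda>t::real. 1 + \<bar>t\<bar>) at_top at_bot"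
  proof (intro filterlim_tendsto_add_at_top[OF tendsto_const])
    show "filterlim (\<lambda>t::real. \<bar>t\<bar>) at_top at_bot"
      using filterlim_compose[OF filterlim_abs_real filterlim_uminus_at_top_at_bot] by simp
  qed
  from Lim_null_comparison[OF ev lim[OF this]]
  show "((\<lambda>t::real. (1 + \<bar>t\<bar>) ^ K * exp (- t\<^sup>2)) \<longlongrightarrow> 0) at_bot" .
qed

declare He.simps(2)[simp del]

lemma gdomI: "f \<in> borel_measurable borel \<Longrightarrow> (\<And>t. \<bar>f t\<bar> \<le> A * (1 + \<bar>t\<bar>) ^ K * exp (- t\<^sup>2 / 2)) \<Longrightarrow> gdom f"
  unfolding gdom_def by blast

lemma gdomE:
  assumes "gdom f"
  obtains A K where "A \<ge> 0" "\<And>t. \<bar>f t\<bar> \<le> A * (1 + \<bar>t\<bar>) ^ K * exp (- t\<^sup>2 / 2)"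
proof -
  from assms obtain A K where b: "\<And>t. \<bar>f t\<bar> \<le> A * (1 + \<bar>t\<bar>) ^ K * exp (- t\<^sup>2 / 2)"
    unfolding gdom_def by blast
  have "\<bar>f 0\<bar> \<le> A" using b[of 0] by simp
  then have "A \<ge> 0" by linarith
  with b that show ?thesis by blast
qed

lemma gdom_meas: "gdom f \<Longrightarrow> f \<in> borel_measurable borel"
  unfolding gdom_def by blast

lemma exp_half_sq: "exp (- t\<^sup>2 / 2) * exp (- t\<^sup>2 / 2) = exp (- (t::real)\<^sup>2)"
  by (simp add: exp_add[symmetric])

lemma gdom_prod_bound:
  assumes "gdom f" "gdom g"
  obtains A K where "\<And>t. \<bar>f t * g t\<bar> \<le> A * ((1 + \<bar>t\<bar>) ^ K * exp (- t\<^sup>2))"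
proof -
  obtain A1 K1 where A1: "A1 \<ge> 0" "\<And>t. \<bar>f t\<bar> \<le> A1 * (1 + \<bar>t\<bar>) ^ K1 * exp (- t\<^sup>2 / 2)"
    using gdomE[OF assms(1)] by blast
  obtain A2 K2 where A2: "A2 \<ge> 0" "\<And>t. \<bar>g t\<bar> \<le> A2 * (1 + \<bar>t\<bar>) ^ K2 * exp (- t\<^sup>2 / 2)"
    using gdomE[OF assms(2)] by blast
  have "\<bar>f t * g t\<bar> \<le> (A1 * A2) * ((1 + \<bar>t\<bar>) ^ (K1 + K2) * exp (- t\<^sup>2))" for t
  proof -
    have "\<bar>f t * g t\<bar> = \<bar>f t\<bar> * \<bar>g t\<bar>" by (simp add: abs_mult)
    also have "\<dots> \<le> (A1 * (1 + \<bar>t\<bar>) ^ K1 * exp (- t\<^sup>2 / 2)) * (A2 * (1 + \<bar>t\<bar>) ^ K2 * exp (- t\<^sup>2 / 2))"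
      by (intro mult_mono A1(2) A2(2)) (use A1 in auto)
    also have "\<dots> = (A1 * A2) * ((1 + \<bar>t\<bar>) ^ (K1 + K2) * (exp (- t\<^sup>2 / 2) * exp (- t\<^sup>2 / 2)))"
      by (simp add: power_add algebra_simps)
    also have "\<dots> = (A1 * A2) * ((1 + \<bar>t\<bar>) ^ (K1 + K2) * exp (- t\<^sup>2))"
      by (simp only: exp_half_sq)
    finally show ?thesis .
  qed
  then show ?thesis using that by blast
qed

lemma gdom_prod_integrable:
  assumes "gdom f" "gdom g"
  shows "integrable lborel (\<lambda>t. f t * g t)"
proof -
  obtain A K where b: "\<And>t. \<bar>f t * g t\<bar> \<le> A * ((1 + \<bar>t\<bar>) ^ K * exp (- t\<^sup>2))"
    using gdom_prod_bound[OF assms] by blast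
  show ?thesis
  proof (rule Bochner_Integration.integrable_bound)
    show "integrable lborel (\<lambda>t::real. A * ((1 + \<bar>t\<bar>) ^ K * exp (- t\<^sup>2)))"
      by (intro integrable_mult_right poly_gauss_integrable)
    show "(\<lambda>t. f t * g t) \<in> borel_measurable lborel"
      using gdom_meas[OF assms(1)] gdom_meas[OF assms(2)] by simp
    show "AE x in lborel. norm (f x * g x) \<le> norm (A * ((1 + \<bar>x::real\<bar>) ^ K * exp (- x\<^sup>2)))"
      using b by (intro AE_I2) (auto intro: order_trans abs_ge_self)
  qed
qed

lemma gdom_prod_lim:
  assumes "gdom f" "gdom g"
  shows "((\<lambda>t. f t * g t) \<longlongrightarrow> 0) at_top" "((\<lambda>t. f t * g t) \<longlongrightarrow> 0) at_bot"
proof -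
  obtain A K where b: "\<And>t. \<bar>f t * g t\<bar> \<le> A * ((1 + \<bar>t\<bar>) ^ K * exp (- t\<^sup>2))"
    using gdom_prod_bound[OF assms] by blast
  have ev: "eventually (\<lambda>t. norm (f t * g t) \<le> A * ((1 + \<bar>t\<bar>) ^ K * exp (- t\<^sup>2))) F" for F
    using b by (auto intro!: always_eventually)
  show "((\<lambda>t. f t * g t) \<longlongrightarrow> 0) at_top"
    by (rule Lim_null_comparison[OF ev]) (use tendsto_mult_right_zero[OF poly_gauss_lim(1)] in blast)
  show "((\<lambda>t. f t * g t) \<longlongrightarrow> 0) at_bot"
    by (rule Lim_null_comparison[OF ev]) (use tendsto_mult_right_zero[OF poly_gauss_lim(2)] in blast)
qed

lemma gdom_add: "gdom f \<Longrightarrow> gdom g \<Longrightarrow> gdom (\<lambda>t. f t + g t)"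
proof -
  assume f: "gdom f" and g: "gdom g"
  obtain A1 K1 where A1: "A1 \<ge> 0" "\<And>t. \<bar>f t\<bar> \<le> A1 * (1 + \<bar>t\<bar>) ^ K1 * exp (- t\<^sup>2 / 2)"
    using gdomE[OF f] by blast
  obtain A2 K2 where A2: "A2 \<ge> 0" "\<And>t. \<bar>g t\<bar> \<le> A2 * (1 + \<bar>t\<bar>) ^ K2 * exp (- t\<^sup>2 / 2)"
    using gdomE[OF g] by blast
  show ?thesis
  proof (rule gdomI[where A="A1 + A2" and K="K1 + K2"])
    show "(\<lambda>t. f t + g t) \<in> borel_measurable borel"
      using gdom_meas[OF f] gdom_meas[OF g] by simp
    fix t :: real
    have p1: "(1 + \<bar>t\<bar>) ^ K1 \<le> (1 + \<bar>t\<bar>) ^ (K1 + K2)" and p2: "(1 + \<bar>t\<bar>) ^ K2 \<le> (1 + \<bar>t\<bar>) ^ (K1 + K2)"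
      by (rule power_increasing; simp)+
    have "\<bar>f t + g t\<bar> \<le> \<bar>f t\<bar> + \<bar>g t\<bar>" by (rule abs_triangle_ineq)
    also have "\<dots> \<le> A1 * (1 + \<bar>t\<bar>) ^ (K1 + K2) * exp (- t\<^sup>2 / 2) + A2 * (1 + \<bar>t\<bar>) ^ (K1 + K2) * exp (- t\<^sup>2 / 2)"
    proof (rule add_mono)
      show "\<bar>f t\<bar> \<le> A1 * (1 + \<bar>t\<bar>) ^ (K1 + K2) * exp (- t\<^sup>2 / 2)"
        using A1(2)[of t] mult_right_mono[OF mult_left_mono[OF p1 A1(1)], of "exp (- t\<^sup>2 / 2)"] by simp
      show "\<bar>g t\<bar> \<le> A2 * (1 + \<bar>t\<bar>) ^ (K1 + K2) * exp (- t\<^sup>2 / 2)"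
        using A2(2)[of t] mult_right_mono[OF mult_left_mono[OF p2 A2(1)], of "exp (- t\<^sup>2 / 2)"] by simp
    qed
    also have "\<dots> = (A1 + A2) * (1 + \<bar>t\<bar>) ^ (K1 + K2) * exp (- t\<^sup>2 / 2)"
      by (simp add: algebra_simps)
    finally show "\<bar>f t + g t\<bar> \<le> (A1 + A2) * (1 + \<bar>t\<bar>) ^ (K1 + K2) * exp (- t\<^sup>2 / 2)" .
  qed
qed

lemma gdom_cmult: "gdom f \<Longrightarrow> gdom (\<lambda>t. c * f t)"
proof -
  assume f: "gdom f"
  obtain A1 K1 where A1: "A1 \<ge> 0" "\<And>t. \<bar>f t\<bar> \<le> A1 * (1 + \<bar>t\<bar>) ^ K1 * exp (- t\<^sup>2 / 2)"
    using gdomE[OF f] by blast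
  show ?thesis
  proof (rule gdomI[where A="\<bar>c\<bar> * A1" and K="K1"])
    show "(\<lambda>t. c * f t) \<in> borel_measurable borel"
      using gdom_meas[OF f] by simp
    fix t :: real
    have "\<bar>c * f t\<bar> = \<bar>c\<bar> * \<bar>f t\<bar>" by (simp add: abs_mult)
    also have "\<dots> \<le> \<bar>c\<bar> * (A1 * (1 + \<bar>t\<bar>) ^ K1 * exp (- t\<^sup>2 / 2))"
      by (intro mult_left_mono A1(2)) auto
    finally show "\<bar>c * f t\<bar> \<le> \<bar>c\<bar> * A1 * (1 + \<bar>t\<bar>) ^ K1 * exp (- t\<^sup>2 / 2)"
      by (simp add: algebra_simps)
  qed
qed

lemma gdom_tmult: "gdom f \<Longrightarrow> gdom (\<lambda>t. t * f t)"
proof -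
  assume f: "gdom f"
  obtain A1 K1 where A1: "A1 \<ge> 0" "\<And>t. \<bar>f t\<bar> \<le> A1 * (1 + \<bar>t\<bar>) ^ K1 * exp (- t\<^sup>2 / 2)"
    using gdomE[OF f] by blast
  show ?thesis
  proof (rule gdomI[where A="A1" and K="Suc K1"])
    show "(\<lambda>t. t * f t) \<in> borel_measurable borel"
      using gdom_meas[OF f] by simp
    fix t :: real
    have "\<bar>t * f t\<bar> = \<bar>t\<bar> * \<bar>f t\<bar>" by (simp add: abs_mult)
    also have "\<dots> \<le> (1 + \<bar>t\<bar>) * (A1 * (1 + \<bar>t\<bar>) ^ K1 * exp (- t\<^sup>2 / 2))"
      by (intro mult_mono A1(2)) auto
    finally show "\<bar>t * f t\<bar> \<le> A1 * (1 + \<bar>t\<bar>) ^ Suc K1 * exp (- t\<^sup>2 / 2)"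
      by (simp add: algebra_simps)
  qed
qed

definition phi :: "nat \<Rightarrow> real \<Rightarrow> real" where
  "phi n t = He n t * exp (- t\<^sup>2 / 2)"

lemma gdom_phi: "gdom (phi n)"
proof -
  obtain A where A: "\<And>t. \<bar>He n t\<bar> \<le> A * (1 + \<bar>t\<bar>) ^ n"
    using He_bound[of n] by blast
  show ?thesis
  proof (rule gdomI[where A=A and K=n])
    show "phi n \<in> borel_measurable borel"
      unfolding phi_def by measurable
    fix t :: real
    show "\<bar>phi n t\<bar> \<le> A * (1 + \<bar>t\<bar>) ^ n * exp (- t\<^sup>2 / 2)"
      unfolding phi_def abs_mult abs_exp_cancel by (intro mult_right_mono A) auto
  qed
qed

lemma gauss_He_deriv:
  "((\<lambda>t. He n t * exp (- t\<^sup>2)) has_real_derivative (- He (Suc n) t * exp (- t\<^sup>2))) (at t)"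
proof -
  have "((\<lambda>t. He n t * exp (- t\<^sup>2)) has_real_derivative
     (2 * real n * He (n - 1) t * exp (- t\<^sup>2) + He n t * (exp (- t\<^sup>2) * (- (2 * t))))) (at t)"
    by (auto intro!: derivative_eq_intros He_deriv)
  moreover have "2 * real n * He (n - 1) t * exp (- t\<^sup>2) + He n t * (exp (- t\<^sup>2) * (- (2 * t)))
      = - He (Suc n) t * exp (- t\<^sup>2)"
    by (simp add: He_rec algebra_simps)
  ultimately show ?thesis by simp
qed

lemma gauss_iter_deriv:
  "(deriv ^^ n) (\<lambda>t. exp (- t\<^sup>2)) = (\<lambda>t. (-1) ^ n * He n t * exp (- t\<^sup>2))"
proof (induction n)
  case 0 then show ?case by simp
next
  case (Suc n)
  have hd: "deriv (\<lambda>t. (-1) ^ n * He n t * exp (- t\<^sup>2)) t = (-1) ^ Suc n * He (Suc n) t * exp (- t\<^sup>2)" for t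
  proof -
    have "((\<lambda>t. (-1) ^ n * (He n t * exp (- t\<^sup>2))) has_real_derivative ((-1) ^ n * (- He (Suc n) t * exp (- t\<^sup>2)))) (at t)"
      by (intro DERIV_cmult gauss_He_deriv)
    then show ?thesis by (intro DERIV_imp_deriv) (simp add: algebra_simps)
  qed
  show ?case unfolding funpow.simps(2) o_def Suc.IH using hd by (simp add: fun_eq_iff)
qed

lemma gauss_iter_deriv_differentiable:
  "(deriv ^^ n) (\<lambda>t. exp (- t\<^sup>2)) differentiable (at (t::real))"
  unfolding gauss_iter_deriv
  using DERIV_cmult[OF gauss_He_deriv[of n t], of "(-1)^n"]
  by (simp add: real_differentiable_def mult.assoc) blast

definition He_norm2 :: "nat \<Rightarrow> real" where
  "He_norm2 n = integral\<^sup>L lborel (\<lambda>t. He n t ^ 2 * exp (- t\<^sup>2))"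

lemma He_sq_eq_phi: "He n t ^ 2 * exp (- t\<^sup>2) = phi n t * phi n t"
  unfolding phi_def exp_half_sq[symmetric] power2_eq_square[of "He n t"] by (simp only: mult_ac)

lemma He_sq_integrable: "integrable lborel (\<lambda>t. He n t ^ 2 * exp (- t\<^sup>2))"
  unfolding He_sq_eq_phi by (intro gdom_prod_integrable gdom_phi)

lemma He_norm2_0: "He_norm2 0 = sqrt pi"
proof -
  have "has_bochner_integral lborel (\<lambda>x::real. exp (-x\<^sup>2)*x^(2 * 0))
      (2 *\<^sub>R ((sqrt pi / 2) * (fact (2 * 0) / (2 ^ (2 * 0) * fact 0))))"
    by (rule has_bochner_integral_even_function[OF gaussian_moment_even_pos[where k=0]]) simp
  then show ?thesis unfolding He_norm2_def
    by (simp add: has_bochner_integral_integral_eq)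
qed

lemma He_norm2_Suc: "He_norm2 (Suc n) = 2 * real (Suc n) * He_norm2 n"
proof -
  let ?F = "\<lambda>t. He (Suc n) t * (He n t * exp (- t\<^sup>2))"
  let ?f = "\<lambda>t. 2 * real (Suc n) * (He n t ^ 2 * exp (- t\<^sup>2)) - He (Suc n) t ^ 2 * exp (- t\<^sup>2)"
  have "integral\<^sup>L lborel ?f = 0"
  proof (rule FTC_real_line)
    fix x
    have d: "(?F has_real_derivative (2 * real (Suc n) * He (Suc n - 1) x * (He n x * exp (- x\<^sup>2)) + (- He (Suc n) x * exp (- x\<^sup>2)) * He (Suc n) x)) (at x)"
      by (rule DERIV_mult[OF He_deriv[of "Suc n" x] gauss_He_deriv[of n x]])
    have e: "2 * real (Suc n) * He (Suc n - 1) x * (He n x * exp (- x\<^sup>2)) + (- He (Suc n) x * exp (- x\<^sup>2)) * He (Suc n) x = ?f x"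
      by (simp add: power2_eq_square algebra_simps)
    show "(?F has_real_derivative ?f x) (at x)"
      by (rule DERIV_cong[OF d e])
    show "continuous_on UNIV ?f"
      by (intro continuous_intros)
    show "integrable lborel ?f"
      by (intro Bochner_Integration.integrable_diff integrable_mult_right He_sq_integrable)
    have eqF: "?F = (\<lambda>t. phi (Suc n) t * phi n t)"
      unfolding phi_def by (simp add: fun_eq_iff exp_half_sq[symmetric] algebra_simps)
    show "(?F \<longlongrightarrow> 0) at_top" unfolding eqF by (intro gdom_prod_lim gdom_phi)
    show "(?F \<longlongrightarrow> 0) at_bot" unfolding eqF by (intro gdom_prod_lim gdom_phi)
  qed
  moreover have "integral\<^sup>L lborel ?f = 2 * real (Suc n) * He_norm2 n - He_norm2 (Suc n)"
    unfolding He_norm2_def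
    by (subst Bochner_Integration.integral_diff) (auto intro!: integrable_mult_right He_sq_integrable)
  ultimately show ?thesis by simp
qed

lemma He_norm2_eq: "He_norm2 n = 2 ^ n * fact n * sqrt pi"
  by (induction n) (simp_all add: He_norm2_0 He_norm2_Suc)

definition nu :: "nat \<Rightarrow> real" where
  "nu n = sqrt (2 ^ n * fact n * sqrt pi)"

definition sc :: "nat \<Rightarrow> real" where
  "sc k = sqrt (real k / 2)"

definition psi :: "nat \<Rightarrow> real \<Rightarrow> real" where
  "psi n t = phi n t / nu n"

lemma nu_pos: "nu n > 0"
  unfolding nu_def by simp

lemma sc_nonneg: "sc k \<ge> 0"
  unfolding sc_def by simp

lemma sc_Suc_pos: "sc (Suc k) > 0"
  unfolding sc_def by simp

lemma sc_sq: "sc k * sc k = real k / 2"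
  unfolding sc_def by simp

lemma sc_mono: "m \<le> k \<Longrightarrow> sc m \<le> sc k"
  unfolding sc_def by simp

lemma nu_Suc: "nu (Suc n) = 2 * sc (Suc n) * nu n"
proof -
  have "nu (Suc n) = sqrt (2 * real (Suc n)) * nu n"
    unfolding nu_def by (simp add: real_sqrt_mult[symmetric] algebra_simps)
  moreover have "sqrt (2 * real (Suc n)) = 2 * sc (Suc n)"
  proof -
    have "2 * sc (Suc n) = sqrt 4 * sqrt (real (Suc n) / 2)"
      unfolding sc_def by simp
    also have "\<dots> = sqrt (2 * real (Suc n))"
      by (simp only: real_sqrt_mult[symmetric]) simp
    finally show ?thesis by simp
  qed
  ultimately show ?thesis by simp
qed

lemma nu_sq: "nu n * nu n = He_norm2 n"
  unfolding nu_def He_norm2_eq by simp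

lemma psi_L1: "real n * He (n - 1) t * exp (- t\<^sup>2 / 2) / nu n = sc n * psi (n - 1) t"
proof (cases n)
  case 0 then show ?thesis by (simp add: sc_def)
next
  case (Suc m)
  have s: "sc (Suc m) * sc (Suc m) = real (Suc m) / 2" by (rule sc_sq)
  have sp: "sc (Suc m) > 0" by (rule sc_Suc_pos)
  have np: "nu m > 0" by (rule nu_pos)
  have "real n * He (n - 1) t * exp (- t\<^sup>2 / 2) / nu n = real (Suc m) * phi m t / (2 * sc (Suc m) * nu m)"
    using Suc by (simp add: nu_Suc phi_def)
  also have "\<dots> = sc (Suc m) * (phi m t / nu m)"
  proof -
    have r: "real (Suc m) = 2 * (sc (Suc m) * sc (Suc m))" using s by simp
    show ?thesis unfolding r using sp np by (simp add: field_simps)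
  qed
  finally show ?thesis using Suc by (simp add: psi_def)
qed

lemma psi_L2: "He (Suc n) t * exp (- t\<^sup>2 / 2) / (2 * nu n) = sc (Suc n) * psi (Suc n) t"
proof -
  have sp: "sc (Suc n) > 0" by (rule sc_Suc_pos)
  have np: "nu n > 0" by (rule nu_pos)
  show ?thesis
    unfolding psi_def nu_Suc phi_def using sp np by (simp add: field_simps)
qed

lemma psi_x: "t * psi n t = sc n * psi (n - 1) t + sc (Suc n) * psi (Suc n) t"
proof -
  have "t * He n t = He (Suc n) t / 2 + real n * He (n - 1) t"
    by (simp add: He_rec field_simps)
  then have "t * psi n t = (He (Suc n) t / 2 + real n * He (n - 1) t) * exp (- t\<^sup>2 / 2) / nu n"
    unfolding psi_def phi_def by (metis mult.assoc times_divide_eq_right)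
  also have "\<dots> = He (Suc n) t * exp (- t\<^sup>2 / 2) / (2 * nu n) + real n * He (n - 1) t * exp (- t\<^sup>2 / 2) / nu n"
    using nu_pos[of n] by (simp add: field_simps)
  finally show ?thesis by (simp only: psi_L1 psi_L2)
qed

lemma psi_deriv:
  "(psi n has_real_derivative (sc n * psi (n - 1) t - sc (Suc n) * psi (Suc n) t)) (at t)"
proof -
  have d: "(psi n has_real_derivative
      ((2 * real n * He (n - 1) t * exp (- t\<^sup>2 / 2) + He n t * (exp (- t\<^sup>2 / 2) * (- (2 * t) / 2))) / nu n)) (at t)"
    unfolding psi_def[abs_def] phi_def using nu_pos[of n]
    by (auto intro!: derivative_eq_intros He_deriv)
  have "(2 * real n * He (n - 1) t * exp (- t\<^sup>2 / 2) + He n t * (exp (- t\<^sup>2 / 2) * (- (2 * t) / 2))) / nu n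
      = 2 * (real n * He (n - 1) t * exp (- t\<^sup>2 / 2) / nu n) - t * psi n t"
    unfolding psi_def phi_def using nu_pos[of n] by (simp add: field_simps)
  also have "\<dots> = sc n * psi (n - 1) t - sc (Suc n) * psi (Suc n) t"
    unfolding psi_L1 psi_x by simp
  finally show ?thesis using d by simp
qed

lemma gdom_psi: "gdom (psi n)"
  unfolding psi_def[abs_def] divide_inverse
  using gdom_cmult[OF gdom_phi[of n], of "inverse (nu n)"] by (simp add: mult.commute)

lemma psi_norm: "integral\<^sup>L lborel (\<lambda>t. psi n t * psi n t) = 1"
proof -
  have "(\<lambda>t. psi n t * psi n t) = (\<lambda>t. inverse (nu n * nu n) * (He n t ^ 2 * exp (- t\<^sup>2)))"
    unfolding psi_def He_sq_eq_phi by (simp add: fun_eq_iff field_simps)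
  then have "integral\<^sup>L lborel (\<lambda>t. psi n t * psi n t) = inverse (nu n * nu n) * He_norm2 n"
    unfolding He_norm2_def by simp
  also have "\<dots> = 1" using nu_pos[of n] by (simp add: nu_sq[symmetric] field_simps)
  finally show ?thesis .
qed

definition Fl :: "(real \<times> nat) list \<Rightarrow> real \<Rightarrow> real" where
  "Fl xs t = (\<Sum>(c, m)\<leftarrow>xs. c * psi m t)"

definition Xop :: "(real \<times> nat) list \<Rightarrow> (real \<times> nat) list" where
  "Xop xs = concat (map (\<lambda>(c, m). [(c * sc m, m - 1), (c * sc (Suc m), Suc m)]) xs)"

definition Dop :: "(real \<times> nat) list \<Rightarrow> (real \<times> nat) list" where
  "Dop xs = concat (map (\<lambda>(c, m). [(c * sc m, m - 1), (- (c * sc (Suc m)), Suc m)]) xs)"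

definition Wt :: "(real \<times> nat) list \<Rightarrow> real" where
  "Wt xs = (\<Sum>(c, m)\<leftarrow>xs. \<bar>c\<bar>)"

lemma Fl_Nil[simp]: "Fl [] t = 0" and Fl_Cons[simp]: "Fl ((c, m) # xs) t = c * psi m t + Fl xs t"
  by (simp_all add: Fl_def)

lemma Xop_Nil[simp]: "Xop [] = []" and Xop_Cons[simp]: "Xop ((c, m) # xs) = (c * sc m, m - 1) # (c * sc (Suc m), Suc m) # Xop xs"
  by (simp_all add: Xop_def)

lemma Dop_Nil[simp]: "Dop [] = []" and Dop_Cons[simp]: "Dop ((c, m) # xs) = (c * sc m, m - 1) # (- (c * sc (Suc m)), Suc m) # Dop xs"
  by (simp_all add: Dop_def)

lemma Wt_Nil[simp]: "Wt [] = 0" and Wt_Cons[simp]: "Wt ((c, m) # xs) = \<bar>c\<bar> + Wt xs"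
  by (simp_all add: Wt_def)

lemma Wt_nonneg: "Wt xs \<ge> 0"
  by (induction xs) auto

lemma Fl_X: "t * Fl xs t = Fl (Xop xs) t"
proof (induction xs)
  case Nil then show ?case by simp
next
  case (Cons p xs)
  obtain c m where p: "p = (c, m)" by fastforce
  have "t * Fl (p # xs) t = c * (t * psi m t) + t * Fl xs t" using p by (simp add: algebra_simps)
  also have "\<dots> = Fl (Xop (p # xs)) t" using p Cons by (simp add: psi_x algebra_simps)
  finally show ?case .
qed

lemma Fl_D: "(Fl xs has_real_derivative Fl (Dop xs) t) (at t)"
proof (induction xs)
  case Nil then show ?case by simp
next
  case (Cons p xs)
  obtain c m where p: "p = (c, m)" by fastforce
  have "((\<lambda>t. c * psi m t + Fl xs t) has_real_derivative
      (c * (sc m * psi (m - 1) t - sc (Suc m) * psi (Suc m) t) + Fl (Dop xs) t)) (at t)"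
    by (intro DERIV_add DERIV_cmult psi_deriv Cons)
  moreover have "Fl (p # xs) = (\<lambda>t. c * psi m t + Fl xs t)" using p by (simp add: fun_eq_iff)
  ultimately show ?case using p by (simp add: algebra_simps)
qed

lemma deriv_Fl: "deriv (Fl xs) = Fl (Dop xs)"
  by (rule ext) (rule DERIV_imp_deriv[OF Fl_D])

lemma iter_deriv_Fl: "(deriv ^^ k) (Fl xs) = Fl ((Dop ^^ k) xs)"
  by (induction k) (simp_all add: deriv_Fl)

lemma iter_deriv_Fl_differentiable: "(deriv ^^ k) (Fl xs) differentiable (at t)"
  unfolding iter_deriv_Fl using Fl_D real_differentiable_def by blast

lemma psi_Fl: "psi n = Fl [(1, n)]"
  by (simp add: fun_eq_iff)

lemma gdom_zero: "gdom (\<lambda>t. 0)"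
  by (rule gdomI[where A=0 and K=0]) auto

lemma gdom_Fl: "gdom (Fl xs)"
proof (induction xs)
  case Nil then show ?case by (simp add: gdom_zero)
next
  case (Cons p xs)
  obtain c m where p: "p = (c, m)" by fastforce
  have "gdom (\<lambda>t. c * psi m t + Fl xs t)"
    by (intro gdom_add gdom_cmult gdom_psi Cons)
  moreover have "Fl (p # xs) = (\<lambda>t. c * psi m t + Fl xs t)" using p by (simp add: fun_eq_iff)
  ultimately show ?case by simp
qed

lemma Xop_idx: "\<forall>p\<in>set xs. snd p \<le> K \<Longrightarrow> \<forall>p\<in>set (Xop xs). snd p \<le> Suc K"
proof (induction xs)
  case Nil then show ?case by simp
next
  case (Cons p xs)
  obtain c m where p: "p = (c, m)" by fastforce
  have "m \<le> K" using Cons.prems p by auto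
  moreover have "\<forall>p\<in>set (Xop xs). snd p \<le> Suc K" using Cons by auto
  ultimately show ?case using p by auto
qed

lemma Dop_idx: "\<forall>p\<in>set xs. snd p \<le> K \<Longrightarrow> \<forall>p\<in>set (Dop xs). snd p \<le> Suc K"
proof (induction xs)
  case Nil then show ?case by simp
next
  case (Cons p xs)
  obtain c m where p: "p = (c, m)" by fastforce
  have "m \<le> K" using Cons.prems p by auto
  moreover have "\<forall>p\<in>set (Dop xs). snd p \<le> Suc K" using Cons by auto
  ultimately show ?case using p by auto
qed

lemma Xop_Wt: "\<forall>p\<in>set xs. snd p \<le> K \<Longrightarrow> Wt (Xop xs) \<le> 2 * sc (Suc K) * Wt xs"
proof (induction xs)
  case Nil then show ?case by simp
next
  case (Cons p xs)
  obtain c m where p: "p = (c, m)" by fastforce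
  have mK: "m \<le> K" using Cons.prems p by auto
  have "\<bar>c * sc m\<bar> + \<bar>c * sc (Suc m)\<bar> = \<bar>c\<bar> * (sc m + sc (Suc m))"
    by (simp add: abs_mult sc_nonneg algebra_simps)
  also have "\<dots> \<le> \<bar>c\<bar> * (2 * sc (Suc K))"
    using sc_mono[of m "Suc K"] sc_mono[of "Suc m" "Suc K"] mK by (intro mult_left_mono) auto
  finally have "\<bar>c * sc m\<bar> + \<bar>c * sc (Suc m)\<bar> \<le> \<bar>c\<bar> * (2 * sc (Suc K))" .
  moreover have "Wt (Xop xs) \<le> 2 * sc (Suc K) * Wt xs" using Cons by auto
  moreover have "2 * sc (Suc K) * Wt (p # xs) = \<bar>c\<bar> * (2 * sc (Suc K)) + 2 * sc (Suc K) * Wt xs"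
    using p by (simp add: algebra_simps)
  ultimately show ?case using p by simp
qed

lemma Dop_Wt: "\<forall>p\<in>set xs. snd p \<le> K \<Longrightarrow> Wt (Dop xs) \<le> 2 * sc (Suc K) * Wt xs"
proof (induction xs)
  case Nil then show ?case by simp
next
  case (Cons p xs)
  obtain c m where p: "p = (c, m)" by fastforce
  have mK: "m \<le> K" using Cons.prems p by auto
  have "\<bar>c * sc m\<bar> + \<bar>- (c * sc (Suc m))\<bar> = \<bar>c\<bar> * (sc m + sc (Suc m))"
    by (simp add: abs_mult sc_nonneg algebra_simps)
  also have "\<dots> \<le> \<bar>c\<bar> * (2 * sc (Suc K))"
    using sc_mono[of m "Suc K"] sc_mono[of "Suc m" "Suc K"] mK by (intro mult_left_mono) auto
  finally have "\<bar>c * sc m\<bar> + \<bar>- (c * sc (Suc m))\<bar> \<le> \<bar>c\<bar> * (2 * sc (Suc K))" .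
  moreover have "Wt (Dop xs) \<le> 2 * sc (Suc K) * Wt xs" using Cons by auto
  moreover have "2 * sc (Suc K) * Wt (p # xs) = \<bar>c\<bar> * (2 * sc (Suc K)) + 2 * sc (Suc K) * Wt xs"
    using p by (simp add: algebra_simps)
  ultimately show ?case using p by simp
qed

lemma Xop_iter:
  assumes "\<forall>p\<in>set xs. snd p \<le> K"
  shows "(\<forall>p\<in>set ((Xop ^^ a) xs). snd p \<le> K + a) \<and> Wt ((Xop ^^ a) xs) \<le> (2 * sc (K + a)) ^ a * Wt xs"
proof (induction a)
  case 0 then show ?case using assms by simp
next
  case (Suc a)
  have i: "\<forall>p\<in>set ((Xop ^^ Suc a) xs). snd p \<le> K + Suc a"
    using Xop_idx[of "(Xop ^^ a) xs" "K + a"] Suc by simp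
  have "Wt ((Xop ^^ Suc a) xs) \<le> 2 * sc (Suc (K + a)) * Wt ((Xop ^^ a) xs)"
    using Xop_Wt[of "(Xop ^^ a) xs" "K + a"] Suc by simp
  also have "\<dots> \<le> 2 * sc (Suc (K + a)) * ((2 * sc (K + a)) ^ a * Wt xs)"
    using Suc sc_nonneg[of "Suc (K + a)"] by (intro mult_left_mono) auto
  also have "\<dots> \<le> 2 * sc (Suc (K + a)) * ((2 * sc (Suc (K + a))) ^ a * Wt xs)"
    using sc_mono[of "K + a" "Suc (K + a)"] sc_nonneg[of "Suc (K + a)"] sc_nonneg[of "K + a"] Wt_nonneg[of xs]
    by (intro mult_left_mono mult_right_mono power_mono) auto
  finally show ?case using i by (simp add: algebra_simps)
qed

lemma Dop_iter:
  assumes "\<forall>p\<in>set xs. snd p \<le> K"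
  shows "(\<forall>p\<in>set ((Dop ^^ a) xs). snd p \<le> K + a) \<and> Wt ((Dop ^^ a) xs) \<le> (2 * sc (K + a)) ^ a * Wt xs"
proof (induction a)
  case 0 then show ?case using assms by simp
next
  case (Suc a)
  have i: "\<forall>p\<in>set ((Dop ^^ Suc a) xs). snd p \<le> K + Suc a"
    using Dop_idx[of "(Dop ^^ a) xs" "K + a"] Suc by simp
  have "Wt ((Dop ^^ Suc a) xs) \<le> 2 * sc (Suc (K + a)) * Wt ((Dop ^^ a) xs)"
    using Dop_Wt[of "(Dop ^^ a) xs" "K + a"] Suc by simp
  also have "\<dots> \<le> 2 * sc (Suc (K + a)) * ((2 * sc (K + a)) ^ a * Wt xs)"
    using Suc sc_nonneg[of "Suc (K + a)"] by (intro mult_left_mono) auto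
  also have "\<dots> \<le> 2 * sc (Suc (K + a)) * ((2 * sc (Suc (K + a))) ^ a * Wt xs)"
    using sc_mono[of "K + a" "Suc (K + a)"] sc_nonneg[of "Suc (K + a)"] sc_nonneg[of "K + a"] Wt_nonneg[of xs]
    by (intro mult_left_mono mult_right_mono power_mono) auto
  finally show ?case using i by (simp add: algebra_simps)
qed

lemma Fl_Xpow: "t ^ a * Fl xs t = Fl ((Xop ^^ a) xs) t"
  by (induction a) (simp_all add: Fl_X[symmetric] algebra_simps)

definition nrm :: "(real \<Rightarrow> real) \<Rightarrow> real" where
  "nrm f = sqrt (integral\<^sup>L lborel (\<lambda>t. f t * f t))"

lemma sq_int_nonneg: "integral\<^sup>L lborel (\<lambda>t::real. f t * f t) \<ge> (0::real)"
  by (rule Bochner_Integration.integral_nonneg) auto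

lemma gdom_lin3:
  assumes f: "gdom f" and g: "gdom g"
  shows "integral\<^sup>L lborel (\<lambda>t. a1 * (f t * f t) + a2 * (f t * g t) + a3 * (g t * g t))
    = a1 * integral\<^sup>L lborel (\<lambda>t. f t * f t) + a2 * integral\<^sup>L lborel (\<lambda>t. f t * g t)
      + a3 * integral\<^sup>L lborel (\<lambda>t. g t * g t)"
proof -
  have iff: "integrable lborel (\<lambda>t. a1 * (f t * f t))" using gdom_prod_integrable[OF f f] by simp
  have igg: "integrable lborel (\<lambda>t. a3 * (g t * g t))" using gdom_prod_integrable[OF g g] by simp
  have ifg: "integrable lborel (\<lambda>t. a2 * (f t * g t))" using gdom_prod_integrable[OF f g] by simp
  have "integral\<^sup>L lborel (\<lambda>t. a1 * (f t * f t) + a2 * (f t * g t) + a3 * (g t * g t))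
     = integral\<^sup>L lborel (\<lambda>t. a1 * (f t * f t) + a2 * (f t * g t)) + integral\<^sup>L lborel (\<lambda>t. a3 * (g t * g t))"
    by (rule Bochner_Integration.integral_add[OF Bochner_Integration.integrable_add[OF iff ifg] igg])
  also have "integral\<^sup>L lborel (\<lambda>t. a1 * (f t * f t) + a2 * (f t * g t))
     = integral\<^sup>L lborel (\<lambda>t. a1 * (f t * f t)) + integral\<^sup>L lborel (\<lambda>t. a2 * (f t * g t))"
    by (rule Bochner_Integration.integral_add[OF iff ifg])
  finally show ?thesis by simp
qed

lemma gdom_CS:
  assumes f: "gdom f" and g: "gdom g"
  shows "integral\<^sup>L lborel (\<lambda>t. f t * g t)
    \<le> sqrt (integral\<^sup>L lborel (\<lambda>t. f t * f t)) * sqrt (integral\<^sup>L lborel (\<lambda>t. g t * g t))"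
proof -
  define A where "A = integral\<^sup>L lborel (\<lambda>t. f t * f t)"
  define B where "B = integral\<^sup>L lborel (\<lambda>t. g t * g t)"
  define C where "C = integral\<^sup>L lborel (\<lambda>t. f t * g t)"
  have iff: "integrable lborel (\<lambda>t. f t * f t)" using gdom_prod_integrable[OF f f] .
  have igg: "integrable lborel (\<lambda>t. g t * g t)" using gdom_prod_integrable[OF g g] .
  have ifg: "integrable lborel (\<lambda>t. f t * g t)" using gdom_prod_integrable[OF f g] .
  have A0: "A \<ge> 0" unfolding A_def by (rule sq_int_nonneg)
  have B0: "B \<ge> 0" unfolding B_def by (rule sq_int_nonneg)
  have quad: "0 \<le> A - 2 * l * C + l\<^sup>2 * B" for l :: real
  proof -
    have "0 \<le> integral\<^sup>L lborel (\<lambda>t. (f t - l * g t) * (f t - l * g t))"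
      by (rule sq_int_nonneg)
    also have "(\<lambda>t. (f t - l * g t) * (f t - l * g t)) = (\<lambda>t. 1 * (f t * f t) + (- 2 * l) * (f t * g t) + l\<^sup>2 * (g t * g t))"
      by (simp add: fun_eq_iff power2_eq_square algebra_simps)
    also have "integral\<^sup>L lborel \<dots> = A - 2 * l * C + l\<^sup>2 * B"
      unfolding A_def B_def C_def gdom_lin3[OF f g] by simp
    finally show ?thesis .
  qed
  have "C \<le> sqrt A * sqrt B"
  proof (cases "B = 0")
    case True
    show ?thesis
    proof (rule ccontr)
      assume "\<not> C \<le> sqrt A * sqrt B"
      then have "C > 0" using True by simp
      have "0 \<le> A - 2 * ((A + 1) / (2 * C)) * C" using quad[of "(A + 1) / (2 * C)"] True by simp
      also have "\<dots> = -1" using \<open>C > 0\<close> by (simp add: field_simps)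
      finally show False by simp
    qed
  next
    case False
    then have Bp: "B > 0" using B0 by simp
    have "0 \<le> A - 2 * (C / B) * C + (C / B)\<^sup>2 * B" by (rule quad)
    also have "\<dots> = A - C\<^sup>2 / B" using Bp by (simp add: field_simps power2_eq_square)
    finally have "C\<^sup>2 \<le> A * B" using Bp by (simp add: field_simps)
    then have "sqrt (C\<^sup>2) \<le> sqrt (A * B)" by (rule real_sqrt_le_mono)
    then show ?thesis by (simp add: real_sqrt_mult)
  qed
  then show ?thesis unfolding A_def B_def C_def .
qed

lemma gdom_minkowski:
  assumes f: "gdom f" and g: "gdom g"
  shows "nrm (\<lambda>t. f t + g t) \<le> nrm f + nrm g"
proof -
  define A where "A = integral\<^sup>L lborel (\<lambda>t. f t * f t)"
  define B where "B = integral\<^sup>L lborel (\<lambda>t. g t * g t)"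
  define C where "C = integral\<^sup>L lborel (\<lambda>t. f t * g t)"
  have iff: "integrable lborel (\<lambda>t. f t * f t)" using gdom_prod_integrable[OF f f] .
  have igg: "integrable lborel (\<lambda>t. g t * g t)" using gdom_prod_integrable[OF g g] .
  have ifg: "integrable lborel (\<lambda>t. f t * g t)" using gdom_prod_integrable[OF f g] .
  have A0: "A \<ge> 0" unfolding A_def by (rule sq_int_nonneg)
  have B0: "B \<ge> 0" unfolding B_def by (rule sq_int_nonneg)
  have "(\<lambda>t. (f t + g t) * (f t + g t)) = (\<lambda>t. 1 * (f t * f t) + 2 * (f t * g t) + 1 * (g t * g t))"
    by (simp add: fun_eq_iff algebra_simps)
  then have "integral\<^sup>L lborel (\<lambda>t. (f t + g t) * (f t + g t)) = A + 2 * C + B"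
    unfolding A_def B_def C_def by (simp only: gdom_lin3[OF f g])
  also have "\<dots> \<le> A + 2 * (sqrt A * sqrt B) + B"
    using gdom_CS[OF f g] unfolding A_def B_def C_def by simp
  also have "\<dots> = (sqrt A + sqrt B)\<^sup>2"
    using A0 B0 by (simp add: power2_eq_square algebra_simps)
  finally have "sqrt (integral\<^sup>L lborel (\<lambda>t. (f t + g t) * (f t + g t))) \<le> sqrt ((sqrt A + sqrt B)\<^sup>2)"
    by (rule real_sqrt_le_mono)
  then show ?thesis unfolding nrm_def A_def[symmetric] B_def[symmetric] using A0 B0 by simp
qed

lemma nrm_cpsi: "nrm (\<lambda>t. c * psi m t) = \<bar>c\<bar>"
proof -
  have "(\<lambda>t. c * psi m t * (c * psi m t)) = (\<lambda>t. c\<^sup>2 * (psi m t * psi m t))"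
    by (simp add: fun_eq_iff power2_eq_square algebra_simps)
  then show ?thesis unfolding nrm_def by (simp add: psi_norm)
qed

lemma nrm_Fl: "nrm (Fl xs) \<le> Wt xs"
proof (induction xs)
  case Nil then show ?case by (simp add: nrm_def fun_eq_iff)
next
  case (Cons p xs)
  obtain c m where p: "p = (c, m)" by fastforce
  have "Fl (p # xs) = (\<lambda>t. c * psi m t + Fl xs t)" using p by (simp add: fun_eq_iff)
  then have "nrm (Fl (p # xs)) \<le> nrm (\<lambda>t. c * psi m t) + nrm (Fl xs)"
    using gdom_minkowski[OF gdom_cmult[OF gdom_psi] gdom_Fl] by simp
  also have "\<dots> \<le> \<bar>c\<bar> + Wt xs" using Cons by (simp add: nrm_cpsi)
  finally have "nrm (Fl (p # xs)) \<le> \<bar>c\<bar> + Wt xs" .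
  moreover have "Wt (p # xs) = \<bar>c\<bar> + Wt xs" using p by simp
  ultimately show ?case by linarith
qed

lemma sc_le_max: "2 * sc (n + k) \<le> 2 * sqrt (real (max n k))"
  unfolding sc_def by (intro mult_left_mono real_sqrt_le_mono) auto

lemma one_dim_bound:
  "nrm (\<lambda>t. t ^ a * (deriv ^^ b) (psi n) t) \<le> (2 * sqrt (real (max n (a + b)))) ^ (a + b)"
proof -
  define ys where "ys = (Dop ^^ b) [(1, n)]"
  have D: "(\<forall>p\<in>set ys. snd p \<le> n + b) \<and> Wt ys \<le> (2 * sc (n + b)) ^ b * Wt [(1, n)]"
    unfolding ys_def by (rule Dop_iter) simp
  have X: "(\<forall>p\<in>set ((Xop ^^ a) ys). snd p \<le> n + b + a) \<and> Wt ((Xop ^^ a) ys) \<le> (2 * sc (n + b + a)) ^ a * Wt ys"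
    using D by (intro Xop_iter) blast
  have feq: "(\<lambda>t. t ^ a * (deriv ^^ b) (psi n) t) = Fl ((Xop ^^ a) ys)"
    unfolding psi_Fl iter_deriv_Fl ys_def by (simp add: fun_eq_iff Fl_Xpow)
  have s0: "0 \<le> sc (n + b)" "0 \<le> sc (n + b + a)" by (simp_all add: sc_nonneg)
  have "nrm (\<lambda>t. t ^ a * (deriv ^^ b) (psi n) t) \<le> Wt ((Xop ^^ a) ys)"
    unfolding feq by (rule nrm_Fl)
  also have "\<dots> \<le> (2 * sc (n + b + a)) ^ a * ((2 * sc (n + b)) ^ b)"
  proof -
    have w1: "Wt ys \<le> (2 * sc (n + b)) ^ b" using D by simp
    have "Wt ((Xop ^^ a) ys) \<le> (2 * sc (n + b + a)) ^ a * Wt ys" using X by blast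
    also have "\<dots> \<le> (2 * sc (n + b + a)) ^ a * (2 * sc (n + b)) ^ b"
      by (rule mult_left_mono[OF w1]) (simp add: s0)
    finally show ?thesis .
  qed
  also have "\<dots> \<le> (2 * sc (n + (a + b))) ^ a * ((2 * sc (n + (a + b))) ^ b)"
    using s0 sc_mono[of "n + b" "n + (a + b)"] sc_nonneg[of "n + (a + b)"]
    by (intro mult_mono power_mono) (auto simp: add_ac)
  also have "\<dots> = (2 * sc (n + (a + b))) ^ (a + b)" by (simp add: power_add)
  also have "\<dots> \<le> (2 * sqrt (real (max n (a + b)))) ^ (a + b)"
    by (intro power_mono sc_le_max) (simp add: sc_nonneg)
  finally show ?thesis .
qed

definition prodfun :: "('n::finite \<Rightarrow> real \<Rightarrow> real) \<Rightarrow> real^'n \<Rightarrow> real" where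
  "prodfun \<Phi> x = (\<Prod>j\<in>UNIV. \<Phi> j (x $ j))"

lemma prodfun_shift:
  "prodfun \<Phi> (x + t *\<^sub>R axis i 1) = (\<Prod>j\<in>UNIV - {i}. \<Phi> j (x $ j)) * \<Phi> i (x $ i + t)"
proof -
  have "prodfun \<Phi> (x + t *\<^sub>R axis i 1) = \<Phi> i (x $ i + t) * (\<Prod>j\<in>UNIV - {i}. \<Phi> j ((x + t *\<^sub>R axis i 1) $ j))"
    unfolding prodfun_def by (subst prod.remove[of _ i]) (auto simp: axis_def)
  also have "(\<Prod>j\<in>UNIV - {i}. \<Phi> j ((x + t *\<^sub>R axis i 1) $ j)) = (\<Prod>j\<in>UNIV - {i}. \<Phi> j (x $ j))"
    by (intro prod.cong) (auto simp: axis_def)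
  finally show ?thesis by simp
qed

lemma pdiff_prodfun:
  assumes "\<Phi> i differentiable (at (x $ i))"
  shows "pdiff i (prodfun \<Phi>) x = prodfun (\<Phi>(i := deriv (\<Phi> i))) x"
proof -
  let ?c = "\<Prod>j\<in>UNIV - {i}. \<Phi> j (x $ j)"
  have d: "(\<Phi> i has_real_derivative deriv (\<Phi> i) (x $ i)) (at (x $ i))"
    using assms by (simp add: DERIV_deriv_iff_real_differentiable)
  then have "((\<lambda>t. \<Phi> i (t + x $ i)) has_real_derivative deriv (\<Phi> i) (x $ i)) (at 0)"
    using DERIV_shift[of "\<Phi> i" _ 0 "x $ i"] by simp
  then have "((\<lambda>t. ?c * \<Phi> i (x $ i + t)) has_real_derivative ?c * deriv (\<Phi> i) (x $ i)) (at 0)"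
    by (intro DERIV_cmult) (simp add: add.commute)
  then have "deriv (\<lambda>t. prodfun \<Phi> (x + t *\<^sub>R axis i 1)) 0 = ?c * deriv (\<Phi> i) (x $ i)"
    unfolding prodfun_shift by (rule DERIV_imp_deriv)
  also have "\<dots> = prodfun (\<Phi>(i := deriv (\<Phi> i))) x"
    unfolding prodfun_def by (subst prod.remove[of _ i]) (auto intro!: prod.cong)
  finally show ?thesis unfolding pdiff_def .
qed

definition smooth1 :: "(real \<Rightarrow> real) \<Rightarrow> bool" where
  "smooth1 f \<longleftrightarrow> (\<forall>k t. (deriv ^^ k) f differentiable (at t))"

lemma pdiff_pow_prodfun:
  assumes "smooth1 (\<Phi> i)"
  shows "(pdiff i ^^ k) (prodfun \<Phi>) = prodfun (\<Phi>(i := (deriv ^^ k) (\<Phi> i)))"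
proof (induction k)
  case 0 then show ?case by simp
next
  case (Suc k)
  have "(pdiff i ^^ Suc k) (prodfun \<Phi>) = pdiff i (prodfun (\<Phi>(i := (deriv ^^ k) (\<Phi> i))))"
    by (simp only: funpow.simps(2) o_apply Suc.IH)
  also have "\<dots> = prodfun ((\<Phi>(i := (deriv ^^ k) (\<Phi> i)))(i := deriv ((deriv ^^ k) (\<Phi> i))))"
  proof (rule ext)
    fix x
    have "pdiff i (prodfun (\<Phi>(i := (deriv ^^ k) (\<Phi> i)))) x
      = prodfun ((\<Phi>(i := (deriv ^^ k) (\<Phi> i)))(i := deriv ((\<Phi>(i := (deriv ^^ k) (\<Phi> i))) i))) x"
      by (rule pdiff_prodfun) (use assms in \<open>simp add: smooth1_def\<close>)
    then show "pdiff i (prodfun (\<Phi>(i := (deriv ^^ k) (\<Phi> i)))) x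
      = prodfun ((\<Phi>(i := (deriv ^^ k) (\<Phi> i)))(i := deriv ((deriv ^^ k) (\<Phi> i)))) x"
      by simp
  qed
  also have "\<dots> = prodfun (\<Phi>(i := (deriv ^^ Suc k) (\<Phi> i)))"
    by simp
  finally show ?case .
qed

lemma foldr_prodfun:
  assumes "\<And>j. smooth1 (\<Phi> j)" "distinct L"
  shows "foldr (\<lambda>j g. (pdiff j ^^ \<beta> j) g) L (prodfun \<Phi>)
     = prodfun (\<lambda>j. if j \<in> set L then (deriv ^^ \<beta> j) (\<Phi> j) else \<Phi> j)"
  using assms(2)
proof (induction L)
  case Nil then show ?case by simp
next
  case (Cons a L)
  let ?\<Psi> = "\<lambda>j. if j \<in> set L then (deriv ^^ \<beta> j) (\<Phi> j) else \<Phi> j"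
  have "a \<notin> set L" using Cons by simp
  then have sa: "smooth1 (?\<Psi> a)" using assms(1) by simp
  have "foldr (\<lambda>j g. (pdiff j ^^ \<beta> j) g) (a # L) (prodfun \<Phi>) = (pdiff a ^^ \<beta> a) (prodfun ?\<Psi>)"
    using Cons by simp
  also have "\<dots> = prodfun (?\<Psi>(a := (deriv ^^ \<beta> a) (?\<Psi> a)))"
    by (rule pdiff_pow_prodfun[where \<Phi> = ?\<Psi> and i = a, OF sa])
  also have "?\<Psi>(a := (deriv ^^ \<beta> a) (?\<Psi> a)) = (\<lambda>j. if j \<in> set (a # L) then (deriv ^^ \<beta> j) (\<Phi> j) else \<Phi> j)"
    using \<open>a \<notin> set L\<close> by (auto simp: fun_eq_iff)
  finally show ?case .
qed

lemma Dmulti_prodfun: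
  fixes \<Phi> :: "'n::{finite,linorder} \<Rightarrow> real \<Rightarrow> real"
  assumes "\<And>j. smooth1 (\<Phi> j)"
  shows "Dmulti \<beta> (prodfun \<Phi>) = prodfun (\<lambda>j. (deriv ^^ \<beta> j) (\<Phi> j))"
  unfolding Dmulti_def by (subst foldr_prodfun[OF assms]) auto

lemma smooth1_Fl: "smooth1 (Fl xs)"
  unfolding smooth1_def by (simp add: iter_deriv_Fl_differentiable)

lemma smooth1_gauss: "smooth1 (\<lambda>t. exp (- t\<^sup>2))"
  unfolding smooth1_def by (simp add: gauss_iter_deriv_differentiable)

lemma Basis_vec_real: "(Basis :: (real^'n::finite) set) = range (\<lambda>i. axis i 1)"
  unfolding Basis_vec_def by auto

lemma inj_axis1: "inj (\<lambda>i::'n::finite. (axis i 1 :: real^'n))"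
  by (auto simp: inj_def axis_eq_axis)

lemma sum_Basis_nth:
  fixes f :: "real^'n::finite \<Rightarrow> real"
  shows "(\<Sum>b\<in>Basis. f b *\<^sub>R b) $ j = f (axis j 1)"
proof -
  have "(\<Sum>b\<in>Basis. f b *\<^sub>R b) = (\<Sum>i\<in>UNIV. f (axis i 1) *\<^sub>R (axis i 1 :: real^'n))"
    unfolding Basis_vec_real by (subst sum.reindex[OF inj_axis1]) simp
  also have "\<dots> $ j = (\<Sum>i\<in>UNIV. f (axis i 1) * (axis i 1 :: real^'n) $ j)"
    by (simp add: sum_component)
  also have "\<dots> = (\<Sum>i\<in>UNIV. if i = j then f (axis j 1) else 0)"
    by (intro sum.cong) (auto simp: axis_def)
  also have "\<dots> = f (axis j 1)"
    by simp
  finally show ?thesis .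
qed

lemma integral_vec_prod:
  fixes V :: "'n::finite \<Rightarrow> real \<Rightarrow> real"
  assumes int: "\<And>j. integrable lborel (V j)"
  shows "integral\<^sup>L lborel (\<lambda>x::real^'n. \<Prod>j\<in>UNIV. V j (x $ j)) = (\<Prod>j\<in>UNIV. integral\<^sup>L lborel (V j))"
proof -
  interpret product_sigma_finite "\<lambda>_. lborel"
    by standard
  have Vm[measurable]: "V j \<in> borel_measurable borel" for j
    using borel_measurable_integrable[OF int[of j]] by simp
  let ?T = "\<lambda>f. \<Sum>b\<in>Basis. f b *\<^sub>R (b :: real^'n)"
  have Tm: "?T \<in> measurable (\<Pi>\<^sub>M b\<in>Basis. lborel) borel"
    by measurable
  have gm: "(\<lambda>x::real^'n. \<Prod>j\<in>UNIV. V j (x $ j)) \<in> borel_measurable borel"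
    by measurable
  have "integral\<^sup>L lborel (\<lambda>x::real^'n. \<Prod>j\<in>UNIV. V j (x $ j))
      = integral\<^sup>L (distr (\<Pi>\<^sub>M b\<in>Basis. lborel) borel ?T) (\<lambda>x::real^'n. \<Prod>j\<in>UNIV. V j (x $ j))"
    by (subst lborel_eq[where 'a="real^'n"]) (rule refl)
  also have "\<dots> = integral\<^sup>L (\<Pi>\<^sub>M b\<in>Basis. lborel) (\<lambda>f. \<Prod>j\<in>UNIV. V j (?T f $ j))"
    by (rule integral_distr[OF Tm gm])
  also have "\<dots> = integral\<^sup>L (\<Pi>\<^sub>M b\<in>Basis. lborel) (\<lambda>f. \<Prod>b\<in>Basis. V (axis_index (b::real^'n)) (f b))"
  proof -
    have "(\<lambda>f. \<Prod>j\<in>UNIV. V j (?T f $ j)) = (\<lambda>f. \<Prod>b\<in>Basis. V (axis_index (b::real^'n)) (f b))"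
    proof (rule ext)
    fix f :: "real^'n \<Rightarrow> real"
    have "(\<Prod>j\<in>UNIV. V j (?T f $ j)) = (\<Prod>j\<in>UNIV. V j (f (axis j 1)))"
      by (simp only: sum_Basis_nth)
    also have "\<dots> = (\<Prod>b\<in>Basis. V (axis_index (b::real^'n)) (f b))"
      unfolding Basis_vec_real by (subst prod.reindex[OF inj_axis1]) simp
    finally show "(\<Prod>j\<in>UNIV. V j (?T f $ j)) = (\<Prod>b\<in>Basis. V (axis_index (b::real^'n)) (f b))" .
    qed
    then show ?thesis by (simp only:)
  qed
  also have "\<dots> = (\<Prod>b\<in>Basis. integral\<^sup>L lborel (V (axis_index (b::real^'n))))"
    by (rule product_integral_prod) (auto intro: int)
  also have "\<dots> = (\<Prod>j\<in>UNIV. integral\<^sup>L lborel (V j))"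
    unfolding Basis_vec_real by (subst prod.reindex[OF inj_axis1]) simp
  finally show ?thesis .
qed

lemma norm_sq_vec: "(norm (y :: real^'n::finite))\<^sup>2 = (\<Sum>j\<in>UNIV. (y $ j)\<^sup>2)"
  unfolding power2_norm_eq_inner inner_vec_def by (simp add: power2_eq_square)

lemma gauss_prodfun: "(\<lambda>y::real^'n::finite. exp (- (norm y)\<^sup>2)) = prodfun (\<lambda>j t. exp (- t\<^sup>2))"
  by (simp add: fun_eq_iff prodfun_def norm_sq_vec exp_sum sum_negf[symmetric])

lemma sqrt_prod: "(\<And>j. j \<in> A \<Longrightarrow> f j \<ge> 0) \<Longrightarrow> sqrt (\<Prod>j\<in>A. f j) = (\<Prod>j\<in>A. sqrt (f j))"
proof (induction A rule: infinite_finite_induct)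
  case (infinite A) then show ?case by simp
next
  case empty then show ?case by simp
next
  case (insert x F) then show ?case by (simp add: real_sqrt_mult)
qed

lemma inverse_prod: "inverse (\<Prod>j\<in>A. f j) = (\<Prod>j\<in>A. inverse (f j :: real))"
  using prod_inversef[of f A] by (simp add: o_def)

lemma hermite_norm_const:
  fixes \<gamma> :: "'n::{finite,linorder} \<Rightarrow> nat"
  shows "inverse (sqrt (2 ^ mlen \<gamma> * mfact \<gamma> * pi powr (real CARD('n) / 2))) = (\<Prod>j\<in>UNIV. inverse (nu (\<gamma> j)))"
proof -
  have "pi powr (real CARD('n) / 2) = (\<Prod>j\<in>(UNIV::'n set). sqrt pi)"
    by (simp add: powr_half_sqrt_powr powr_realpow real_sqrt_power)
  then have "2 ^ mlen \<gamma> * mfact \<gamma> * pi powr (real CARD('n) / 2) = (\<Prod>j\<in>UNIV. 2 ^ \<gamma> j * fact (\<gamma> j) * sqrt pi)"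
    by (simp add: mlen_def mfact_def power_sum prod.distrib)
  then show ?thesis
    by (simp add: sqrt_prod inverse_prod nu_def)
qed

lemma sign_sq: "(-1::real) ^ n * (-1) ^ n = 1"
  by (simp add: power_mult_distrib[symmetric])

lemma hermite_fun_prodfun:
  fixes \<gamma> :: "'n::{finite,linorder} \<Rightarrow> nat"
  shows "hermite_fun \<gamma> = prodfun (\<lambda>j. psi (\<gamma> j))"
proof (rule ext)
  fix x :: "(real, 'n) vec"
  have D: "Dmulti \<gamma> (\<lambda>y. exp (- (norm y)\<^sup>2)) x = (\<Prod>j\<in>UNIV. (-1) ^ \<gamma> j * He (\<gamma> j) (x $ j) * exp (- (x $ j)\<^sup>2))"
    unfolding gauss_prodfun by (subst Dmulti_prodfun) (simp_all add: smooth1_gauss prodfun_def gauss_iter_deriv)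
  have s: "(-1::real) ^ mlen \<gamma> = (\<Prod>j\<in>UNIV. (-1) ^ \<gamma> j)"
    by (simp add: mlen_def power_sum)
  have e1: "exp ((norm x)\<^sup>2) = (\<Prod>j\<in>UNIV. exp ((x $ j)\<^sup>2))"
    by (simp add: norm_sq_vec exp_sum)
  have e2: "exp (- (norm x)\<^sup>2 / 2) = (\<Prod>j\<in>UNIV. exp (- (x $ j)\<^sup>2 / 2))"
    by (simp add: norm_sq_vec exp_sum sum_negf[symmetric] sum_divide_distrib)
  have "hermite_fun \<gamma> x = (\<Prod>j\<in>UNIV. inverse (nu (\<gamma> j))) * ((\<Prod>j\<in>UNIV. (-1) ^ \<gamma> j) * (\<Prod>j\<in>UNIV. exp ((x $ j)\<^sup>2))
      * (\<Prod>j\<in>UNIV. (-1) ^ \<gamma> j * He (\<gamma> j) (x $ j) * exp (- (x $ j)\<^sup>2))) * (\<Prod>j\<in>UNIV. exp (- (x $ j)\<^sup>2 / 2))"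
    unfolding hermite_fun_def hermite_poly_def hermite_norm_const D s e1 e2 ..
  also have "\<dots> = (\<Prod>j\<in>UNIV. inverse (nu (\<gamma> j)) * (((-1) ^ \<gamma> j * exp ((x $ j)\<^sup>2))
      * ((-1) ^ \<gamma> j * He (\<gamma> j) (x $ j) * exp (- (x $ j)\<^sup>2))) * exp (- (x $ j)\<^sup>2 / 2))"
    by (simp only: prod.distrib)
  also have "\<dots> = (\<Prod>j\<in>UNIV. psi (\<gamma> j) (x $ j))"
  proof (rule prod.cong[OF refl])
    fix j
    have "exp ((x $ j)\<^sup>2) * exp (- (x $ j)\<^sup>2) = 1" by (simp add: exp_minus)
    then show "inverse (nu (\<gamma> j)) * (((-1) ^ \<gamma> j * exp ((x $ j)\<^sup>2))
      * ((-1) ^ \<gamma> j * He (\<gamma> j) (x $ j) * exp (- (x $ j)\<^sup>2))) * exp (- (x $ j)\<^sup>2 / 2) = psi (\<gamma> j) (x $ j)"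
      unfolding psi_def phi_def using sign_sq[of "\<gamma> j"]
      by (simp add: field_simps)
  qed
  finally show "hermite_fun \<gamma> x = prodfun (\<lambda>j. psi (\<gamma> j)) x" unfolding prodfun_def .
qed

lemma U_Fl: "(\<lambda>t. t ^ a * (deriv ^^ b) (psi n) t) = Fl ((Xop ^^ a) ((Dop ^^ b) [(1, n)]))"
  unfolding psi_Fl iter_deriv_Fl by (simp add: fun_eq_iff Fl_Xpow)

lemma gdom_U: "gdom (\<lambda>t. t ^ a * (deriv ^^ b) (psi n) t)"
  unfolding U_Fl by (rule gdom_Fl)

lemma smooth1_psi: "smooth1 (psi n)"
  unfolding psi_Fl by (rule smooth1_Fl)

lemma L2norm_bound:
  fixes \<gamma> \<alpha> \<beta> :: "'n::{finite,linorder} \<Rightarrow> nat"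
  shows "L2norm (\<lambda>x. mpow x \<alpha> * Dmulti \<beta> (hermite_fun \<gamma>) x)
    \<le> (\<Prod>j\<in>UNIV. (2 * sqrt (real (max (\<gamma> j) (\<alpha> j + \<beta> j)))) ^ (\<alpha> j + \<beta> j))"
proof -
  define U where "U j = (\<lambda>t. t ^ \<alpha> j * (deriv ^^ \<beta> j) (psi (\<gamma> j)) t)" for j
  have f: "(\<lambda>x. mpow x \<alpha> * Dmulti \<beta> (hermite_fun \<gamma>) x) = prodfun U"
    unfolding hermite_fun_prodfun
    by (subst Dmulti_prodfun) (simp_all add: smooth1_psi fun_eq_iff prodfun_def mpow_def U_def prod.distrib)
  have sq: "(prodfun U x)\<^sup>2 = (\<Prod>j\<in>UNIV. U j (x $ j) * U j (x $ j))" for x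
    unfolding prodfun_def by (simp add: power2_eq_square prod.distrib)
  have int: "integrable lborel (\<lambda>t. U j t * U j t)" for j
    unfolding U_def by (intro gdom_prod_integrable gdom_U)
  have "L2norm (prodfun U) = sqrt (\<Prod>j\<in>UNIV. integral\<^sup>L lborel (\<lambda>t. U j t * U j t))"
    unfolding L2norm_def sq by (subst integral_vec_prod[OF int]) (rule refl)
  also have "\<dots> = (\<Prod>j\<in>UNIV. nrm (U j))"
    unfolding nrm_def by (rule sqrt_prod) (rule sq_int_nonneg)
  also have "\<dots> \<le> (\<Prod>j\<in>UNIV. (2 * sqrt (real (max (\<gamma> j) (\<alpha> j + \<beta> j)))) ^ (\<alpha> j + \<beta> j))"
  proof (rule prod_mono)
    fix j :: 'n
    show "0 \<le> nrm (U j) \<and> nrm (U j) \<le> (2 * sqrt (real (max (\<gamma> j) (\<alpha> j + \<beta> j)))) ^ (\<alpha> j + \<beta> j)"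
      unfolding U_def using one_dim_bound[of "\<alpha> j" "\<beta> j" "\<gamma> j"] by (simp add: nrm_def)
  qed
  finally show ?thesis unfolding f .
qed

lemma final_arith:
  fixes L S G E B C H Mb Nk :: real and Ka Kb K :: nat
  assumes L: "L \<le> 2 ^ K * S * G" and G: "G > 0" and S: "S \<ge> 0" and E: "G / C ^ Kb / Mb \<le> E"
    and hy: "S * Mb \<le> B * C ^ Ka * H ^ K * Nk" and K: "Ka + Kb = K"
    and C: "C > 0" and H: "H > 0" and B: "B > 0" and Mb: "Mb > 0" and Nk: "Nk > 0"
  shows "L / ((2 * H * C) ^ K * Nk) \<le> B * E"
proof -
  have D: "(2 * H * C) ^ K * Nk > 0" using H C Nk by simp
  have "2 ^ K * S * G * Mb \<le> 2 ^ K * G * (B * C ^ Ka * H ^ K * Nk)"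
    using mult_left_mono[OF hy, of "2 ^ K * G"] G by (simp add: algebra_simps)
  then have 1: "2 ^ K * S * G \<le> 2 ^ K * G * (B * C ^ Ka * H ^ K * Nk) / Mb"
    using Mb by (simp add: field_simps)
  have "2 ^ K * G * (B * C ^ Ka * H ^ K * Nk) / Mb = B * (G / C ^ Kb / Mb) * ((2 * H * C) ^ K * Nk)"
    using C Mb K[symmetric] by (simp add: field_simps power_add power_mult_distrib)
  also have "\<dots> \<le> B * E * ((2 * H * C) ^ K * Nk)"
    using E B D by (intro mult_right_mono mult_left_mono) auto
  finally have "L \<le> B * E * ((2 * H * C) ^ K * Nk)" using L 1 by linarith
  then show ?thesis using D by (simp add: divide_le_eq)
qed

theorem lemma4p5:
  fixes M N :: "('n::{finite,linorder} \<Rightarrow> nat) \<Rightarrow> real"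
    and H C B :: real
  assumes Mpos: "\<And>\<alpha>. M \<alpha> > 0" and Npos: "\<And>\<alpha>. N \<alpha> > 0"
    and M0: "M (\<lambda>_. 0) = 1" and N0: "N (\<lambda>_. 0) = 1"
    and H: "H > 0" and C: "C > 0" and B: "B > 0"
    and hyp: "\<And>\<alpha> \<beta>. mselfpow_half \<alpha> * M \<beta>
                 \<le> B * C ^ mlen \<alpha> * H ^ mlen (madd \<alpha> \<beta>) * N (madd \<alpha> \<beta>)"
  shows "\<forall>\<gamma> \<alpha> \<beta>.
    ereal (L2norm (\<lambda>x. mpow x \<alpha> * Dmulti \<beta> (hermite_fun \<gamma>) x)
             / ((2 * H * C) ^ mlen (madd \<alpha> \<beta>) * N (madd \<alpha> \<beta>)))
    \<le> ereal B * exp_ereal (weight_fun M (\<chi> j. sqrt (real (\<gamma> j)) / C))"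
proof (intro allI)
  fix \<gamma> \<alpha> \<beta> :: "'n \<Rightarrow> nat"
  define k where "k j = \<alpha> j + \<beta> j" for j
  define a' where "a' j = (if \<gamma> j < k j then k j else 0)" for j
  define b' where "b' j = k j - a' j" for j
  define G where "G = (\<Prod>j\<in>UNIV. sqrt (real (\<gamma> j)) ^ b' j)"
  define t where "t = (\<chi> j. sqrt (real (\<gamma> j)) / C)"
  define L where "L = L2norm (\<lambda>x. mpow x \<alpha> * Dmulti \<beta> (hermite_fun \<gamma>) x)"
  have mk: "madd \<alpha> \<beta> = k" unfolding madd_def k_def by (simp add: fun_eq_iff)
  have mab: "madd a' b' = k" unfolding madd_def a'_def b'_def by (simp add: fun_eq_iff)
  have mlen_ab: "mlen a' + mlen b' = mlen k"
    unfolding mlen_def sum.distrib[symmetric] using mab unfolding madd_def by (simp add: fun_eq_iff)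
  have fac: "(2 * sqrt (real (max (\<gamma> j) (k j)))) ^ k j = 2 ^ k j * (sqrt (real (a' j)) ^ a' j * sqrt (real (\<gamma> j)) ^ b' j)" for j
    unfolding a'_def b'_def by (auto simp: power_mult_distrib max_def)
  have L: "L \<le> 2 ^ mlen k * mselfpow_half a' * G"
  proof -
    have "L \<le> (\<Prod>j\<in>UNIV. (2 * sqrt (real (max (\<gamma> j) (k j)))) ^ k j)"
      unfolding L_def k_def by (rule L2norm_bound)
    also have "\<dots> = 2 ^ mlen k * mselfpow_half a' * G"
      unfolding fac mlen_def mselfpow_half_def G_def by (simp add: prod.distrib power_sum)
    finally show ?thesis .
  qed
  have Gpos: "G > 0"
    unfolding G_def
  proof (rule prod_pos)
    fix j :: 'n
    show "0 < sqrt (real (\<gamma> j)) ^ b' j"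
    proof (cases "b' j = 0")
      case True then show ?thesis by simp
    next
      case False
      then have "\<gamma> j > 0" unfolding b'_def a'_def by (auto split: if_splits)
      then show ?thesis by simp
    qed
  qed
  have Spos: "mselfpow_half a' \<ge> 0"
    unfolding mselfpow_half_def by (intro prod_nonneg) auto
  have mp: "mpow t b' = G / C ^ mlen b'"
    unfolding mpow_def t_def G_def mlen_def
    by (simp add: power_divide prod_dividef power_sum)
  have mp_pos: "mpow t b' > 0" unfolding mp using Gpos C by simp
  have inS: "b' \<in> {\<alpha>. \<forall>j. t $ j = 0 \<longrightarrow> \<alpha> j = 0}"
  proof (intro CollectI allI impI)
    fix j assume "t $ j = 0"
    then have "\<gamma> j = 0" unfolding t_def using C by simp
    then show "b' j = 0" unfolding b'_def a'_def by auto
  qed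
  define w where "w = weight_fun M t"
  have wge: "ereal (ln (\<bar>mpow t b'\<bar> / M b')) \<le> w"
    unfolding w_def weight_fun_def by (rule SUP_upper[OF inS])
  have E: "G / C ^ mlen b' / M b' \<le> exp r" if "w = ereal r" for r
  proof -
    have "ln (mpow t b' / M b') \<le> r" using wge that mp_pos by simp
    then have 1: "exp (ln (mpow t b' / M b')) \<le> exp r" by simp
    have qpos: "mpow t b' / M b' > 0" using mp_pos Mpos[of b'] by simp
    then have "exp (ln (mpow t b' / M b')) = mpow t b' / M b'" by simp
    with 1 have "mpow t b' / M b' \<le> exp r" by simp
    then show ?thesis unfolding mp .
  qed
  have hy: "mselfpow_half a' * M b' \<le> B * C ^ mlen a' * H ^ mlen k * N k"
    using hyp[of a' b'] unfolding mab .
  have goal: "ereal (L / ((2 * H * C) ^ mlen k * N k)) \<le> ereal B * exp_ereal w"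
  proof (cases w)
    case (real r)
    have "L / ((2 * H * C) ^ mlen k * N k) \<le> B * exp r"
      by (rule final_arith[OF L Gpos Spos E[OF real] hy mlen_ab C H B Mpos Npos])
    then show ?thesis using real by (simp add: exp_ereal_def)
  next
    case PInf
    then show ?thesis using B by (simp add: exp_ereal_def)
  next
    case MInf
    then show ?thesis using wge by simp
  qed
  then show "ereal (L2norm (\<lambda>x. mpow x \<alpha> * Dmulti \<beta> (hermite_fun \<gamma>) x)
             / ((2 * H * C) ^ mlen (madd \<alpha> \<beta>) * N (madd \<alpha> \<beta>)))
    \<le> ereal B * exp_ereal (weight_fun M (\<chi> j. sqrt (real (\<gamma> j)) / C))"
    unfolding mk L_def[symmetric] w_def t_def[symmetric] .
qed

end
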